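(* Let $R\subseteq[n-1]$. An $R$-permutation $\pi$ is $R$-312-avoiding if and only if for every $h\in[r]$ one has $$\big(\min\{\pi_{q_h+1},\dots,\pi_{q_{h+1}}\},\ \max\{\pi_1,\dots,\pi_{q_h}\}\big)\subseteq\{\pi_1,\dots,\pi_{q_{h+1}}\},$$ where $(x,y)$ denotes the set of integers strictly between $x$ and $y$.
   Context: Fix $n\ge1$, $[m]=\{1,\dots,m\}$. Fix $R\subseteq[n-1]$ with elements $q_1<\dots<q_r$ ($r=|R|\ge 0$), $q_0:=0$, $q_{r+1}:=n$. The $h$-th carrel ($h\in[r+1]$) is the index set $\{q_{h-1}+1,\dots,q_h\}$. An $R$-permutation is a permutation $\pi=(\pi_1,\dots,\pi_n)$ of $[n]$ in one-line notation that is strictly increasing on each carrel. An $R$-permutation $\pi$ is $R$-312-containing if there exist $h\in[r-1]$ and indices $1\le a\le q_h<b\le q_{h+1}<c\le n$ with $\pi_b<\pi_c<\pi_a$; otherwise it is $R$-312-avoiding. *)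

theory Defs
  imports Main
begin

text \<open>One-line notation: a permutation of [n] is a list p with distinct entries and
  set p = {1..n}; its 1-indexed entry pi_i is ent p i = p ! (i - 1).\<close>

definition ent :: "nat list \<Rightarrow> nat \<Rightarrow> nat" where
  "ent p i = p ! (i - 1)"

definition qpt :: "nat \<Rightarrow> nat set \<Rightarrow> nat \<Rightarrow> nat" where
  "qpt n R h = (if h = 0 then 0
                else if h \<le> card R then sorted_list_of_set R ! (h - 1)
                else n)"

definition is_R_perm :: "nat \<Rightarrow> nat set \<Rightarrow> nat list \<Rightarrow> bool" where
  "is_R_perm n R p \<longleftrightarrow>
     length p = n \<and> distinct p \<and> set p = {1..n} \<and>
     (\<forall>h\<in>{1..card R + 1}. \<forall>i j.
        qpt n R (h - 1) + 1 \<le> i \<and> i < j \<and> j \<le> qpt n R h \<longrightarrow> ent p i < ent p j)"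

definition R_312_containing :: "nat \<Rightarrow> nat set \<Rightarrow> nat list \<Rightarrow> bool" where
  "R_312_containing n R p \<longleftrightarrow>
     (\<exists>h\<in>{1..card R - 1}. \<exists>a b c.
        1 \<le> a \<and> a \<le> qpt n R h \<and> qpt n R h < b \<and> b \<le> qpt n R (h + 1) \<and>
        qpt n R (h + 1) < c \<and> c \<le> n \<and>
        ent p b < ent p c \<and> ent p c < ent p a)"

definition R_312_avoiding :: "nat \<Rightarrow> nat set \<Rightarrow> nat list \<Rightarrow> bool" where
  "R_312_avoiding n R p \<longleftrightarrow> \<not> R_312_containing n R p"

end

theory Submission
  imports Defs
begin

lemma ent_img: "ent p ` {1..length p} = set p"
proof -
  have "ent p ` {1..length p} = (\<lambda>k. p ! k) ` {..<length p}"
  proof (rule set_eqI, rule iffI)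
    fix x assume "x \<in> ent p ` {1..length p}"
    then obtain i where "i \<in> {1..length p}" "x = p ! (i - 1)" by (auto simp: ent_def)
    then show "x \<in> (\<lambda>k. p ! k) ` {..<length p}" by (intro image_eqI[of _ _ "i - 1"]) auto
  next
    fix x assume "x \<in> (\<lambda>k. p ! k) ` {..<length p}"
    then obtain k where "k < length p" "x = p ! k" by auto
    then show "x \<in> ent p ` {1..length p}"
      by (intro image_eqI[of _ _ "k + 1"]) (auto simp: ent_def)
  qed
  also have "\<dots> = set p" by (auto simp: set_conv_nth)
  finally show ?thesis .
qed

lemma ent_inj: "distinct p \<Longrightarrow> i \<in> {1..length p} \<Longrightarrow> j \<in> {1..length p} \<Longrightarrow> ent p i = ent p j \<Longrightarrow> i = j"
  unfolding ent_def using nth_eq_iff_index_eq[of p "i - 1" "j - 1"] by (auto simp: le_imp_diff_is_add)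

lemma key:
  assumes d: "distinct p" and l: "length p = n" and s: "set p = {1..n}"
    and lo: "1 \<le> lo" "lo < hi" "hi \<le> n"
  shows "(\<exists>a b c. 1 \<le> a \<and> a \<le> lo \<and> lo < b \<and> b \<le> hi \<and> hi < c \<and> c \<le> n \<and>
            ent p b < ent p c \<and> ent p c < ent p a) \<longleftrightarrow>
         \<not> ({Min (ent p ` {lo + 1..hi})<..<Max (ent p ` {1..lo})} \<subseteq> ent p ` {1..hi})"
proof
  assume "\<exists>a b c. 1 \<le> a \<and> a \<le> lo \<and> lo < b \<and> b \<le> hi \<and> hi < c \<and> c \<le> n \<and>
            ent p b < ent p c \<and> ent p c < ent p a"
  then obtain a b c where abc: "1 \<le> a" "a \<le> lo" "lo < b" "b \<le> hi" "hi < c" "c \<le> n"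
     "ent p b < ent p c" "ent p c < ent p a" by blast
  have m1: "Min (ent p ` {lo + 1..hi}) \<le> ent p b" using abc by (intro Min_le) auto
  moreover have m2: "ent p a \<le> Max (ent p ` {1..lo})" using abc by (intro Max_ge) auto
  moreover have "ent p c \<notin> ent p ` {1..hi}"
  proof
    assume "ent p c \<in> ent p ` {1..hi}"
    then obtain j where "j \<in> {1..hi}" "ent p c = ent p j" by auto
    then have "c = j" using ent_inj[OF d, of c j] abc l lo by auto
    then show False using \<open>j \<in> {1..hi}\<close> abc by auto
  qed
  moreover have "ent p c \<in> {Min (ent p ` {lo + 1..hi})<..<Max (ent p ` {1..lo})}"
    using order.strict_trans1[OF m1 abc(7)] order.strict_trans2[OF abc(8) m2] by (simp only: greaterThanLessThan_iff)
  ultimately show "\<not> ({Min (ent p ` {lo + 1..hi})<..<Max (ent p ` {1..lo})} \<subseteq> ent p ` {1..hi})"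
    by blast
next
  assume "\<not> ({Min (ent p ` {lo + 1..hi})<..<Max (ent p ` {1..lo})} \<subseteq> ent p ` {1..hi})"
  then obtain v where v: "Min (ent p ` {lo + 1..hi}) < v" "v < Max (ent p ` {1..lo})"
     "v \<notin> ent p ` {1..hi}" unfolding subset_iff greaterThanLessThan_iff by blast
  have "Max (ent p ` {1..lo}) \<in> ent p ` {1..lo}" using lo by (intro Max_in) auto
  then obtain a where a: "a \<in> {1..lo}" "Max (ent p ` {1..lo}) = ent p a" by auto
  have "Min (ent p ` {lo + 1..hi}) \<in> ent p ` {lo + 1..hi}" using lo by (intro Min_in) auto
  then obtain b where b: "b \<in> {lo + 1..hi}" "Min (ent p ` {lo + 1..hi}) = ent p b" by auto
  have "ent p a \<in> set p" using a lo l ent_img[of p] by auto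
  then have "ent p a \<le> n" using s by auto
  then have "v \<in> set p" using v a s by auto
  then obtain c where c: "c \<in> {1..n}" "v = ent p c" using ent_img[of p] l by (metis imageE)
  have "hi < c"
  proof (rule ccontr)
    assume "\<not> hi < c" then have "c \<in> {1..hi}" using c by auto
    then show False using v c by auto
  qed
  then show "\<exists>a b c. 1 \<le> a \<and> a \<le> lo \<and> lo < b \<and> b \<le> hi \<and> hi < c \<and> c \<le> n \<and>
            ent p b < ent p c \<and> ent p c < ent p a"
    using a b c v by (intro exI[of _ a] exI[of _ b] exI[of _ c]) auto
qed

lemma qpt_in: "finite R \<Longrightarrow> h \<in> {1..card R} \<Longrightarrow> qpt n R h \<in> R"
  unfolding qpt_def by auto (metis Suc_le_eq Suc_pred length_sorted_list_of_set nth_mem set_sorted_list_of_set)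

lemma qpt_lt: assumes "finite R" "1 \<le> h" "h < card R" shows "qpt n R h < qpt n R (h + 1)"
proof -
  let ?L = "sorted_list_of_set R"
  have "?L ! (h - 1) < ?L ! h"
    using assms sorted_wrt_nth_less[OF strict_sorted_list_of_set[of R], of "h - 1" h] by auto
  then show ?thesis using assms unfolding qpt_def by auto
qed

theorem fact4p4:
  fixes n :: nat and R :: "nat set" and p :: "nat list"
  assumes "n \<ge> 1" and "R \<subseteq> {1..n - 1}" and "is_R_perm n R p"
  shows "R_312_avoiding n R p \<longleftrightarrow>
    (\<forall>h\<in>{1..card R}.
       {Min (ent p ` {qpt n R h + 1..qpt n R (h + 1)})<..<Max (ent p ` {1..qpt n R h})}
         \<subseteq> ent p ` {1..qpt n R (h + 1)})"
proof -
  have fin: "finite R" using assms(2) finite_subset by blast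
  have P: "distinct p" "length p = n" "set p = {1..n}" using assms(3) unfolding is_R_perm_def by blast+
  have bnd: "1 \<le> qpt n R h \<and> qpt n R h < qpt n R (h + 1) \<and> qpt n R (h + 1) \<le> n"
    if h: "h \<in> {1..card R}" for h
  proof -
    have "qpt n R h \<in> R" using qpt_in[OF fin h] .
    then have 1: "1 \<le> qpt n R h" "qpt n R h \<le> n - 1" using assms(2) by auto
    show ?thesis
    proof (cases "h = card R")
      case True
      then have "qpt n R (h + 1) = n" unfolding qpt_def by auto
      then show ?thesis using 1 assms(1) by auto
    next
      case False
      then have "h + 1 \<in> {1..card R}" using h by auto
      then have "qpt n R (h + 1) \<in> R" using qpt_in[OF fin] by blast
      then have x: "qpt n R (h + 1) \<le> n" using assms(2) by (meson atLeastAtMost_iff diff_le_self le_trans subsetD)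
      have "1 \<le> h" "h < card R" using h False by auto
      then have "qpt n R h < qpt n R (h + 1)" by (rule qpt_lt[OF fin])
      then show ?thesis using 1 x by simp
    qed
  qed
  define C where "C h \<longleftrightarrow> (\<exists>a b c. 1 \<le> a \<and> a \<le> qpt n R h \<and> qpt n R h < b \<and> b \<le> qpt n R (h + 1) \<and>
        qpt n R (h + 1) < c \<and> c \<le> n \<and> ent p b < ent p c \<and> ent p c < ent p a)" for h
  have last: "\<not> C (card R)"
  proof -
    have "qpt n R (card R + 1) = n" unfolding qpt_def by auto
    then show ?thesis unfolding C_def by auto
  qed
  have "R_312_containing n R p \<longleftrightarrow> (\<exists>h\<in>{1..card R}. C h)"
    unfolding R_312_containing_def C_def[symmetric]
  proof
    assume "\<exists>h\<in>{1..card R - 1}. C h"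
    then show "\<exists>h\<in>{1..card R}. C h" by force
  next
    assume "\<exists>h\<in>{1..card R}. C h"
    then obtain h where h: "h \<in> {1..card R}" "C h" by blast
    then have "h \<noteq> card R" using last by auto
    then have "h \<in> {1..card R - 1}" using h(1) by auto
    then show "\<exists>h\<in>{1..card R - 1}. C h" using h(2) by blast
  qed
  moreover have "C h \<longleftrightarrow> \<not> ({Min (ent p ` {qpt n R h + 1..qpt n R (h + 1)})<..<Max (ent p ` {1..qpt n R h})}
         \<subseteq> ent p ` {1..qpt n R (h + 1)})" if "h \<in> {1..card R}" for h
  proof -
    have b: "1 \<le> qpt n R h" "qpt n R h < qpt n R (h + 1)" "qpt n R (h + 1) \<le> n" using bnd[OF that] by auto
    show ?thesis unfolding C_def by (rule key[OF P b])
  qed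
  ultimately show ?thesis unfolding R_312_avoiding_def by blast
qed

end
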